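(* Let $M$ be a connected real-analytic manifold and let $\mathcal F$ be an admissible sheaf of local vector fields on $M$ which is analytically determined. Assume every $p\in M$ has an open neighborhood $\mathcal V_p$ such that for every $q\in\mathcal V_p$ and every germ $\mathfrak g\in\mathfrak G^{\mathcal F}_q$ there is a real-analytic vector field $X$ on $\mathcal V_p$ with $\mathrm{germ}_q(X)=\mathfrak g$. Then $\mathcal F$ is regular.
   Context: A sheaf of local vector fields $\mathcal F$ on $M$ assigns to each connected open $U$ a subspace $\mathcal F(U)$ of smooth vector fields on $U$, stable under restriction to connected open subsets and under gluing. It is admissible if it has the unique continuation property (any $K\in\mathcal F(U)$, $U$ connected, vanishing on a nonempty open subset is $0$) and bounded rank ($\dim\mathcal F(U)\le N$ for a fixed $N$ and all connected open $U$). $\mathfrak G^{\mathcal F}_q$ is the space of germs at $q$ of elements of $\mathcal F$ defined near $q$ (identified if they agree near $q$), $\mathrm{germ}_q$ denotes the germ (of any vector field), $\kappa^{\mathcal F}_q=\dim\mathfrak G^{\mathcal F}_q$, and $\mathcal F$ is regular if it is admissible and $\kappa^{\mathcal F}$ is constant on $M$. Let $\mathfrak X^\omega(U)$ be the real-analytic vector fields and $C^\omega(U)$ the real-analytic functions on $U$. $\mathcal F$ is real-analytic if $\mathcal F(U)\subset\mathfrak X^\omega(U)$ for all $U$. A real-analytic $\mathcal F$ is analytically determined if for every open $U$ there is a collection $\mathcal A(U)$ of maps $F:\mathfrak X^\omega(U)\to C^\omega(U)$, $X\mapsto F^X$, such that (a) for open $V\subset U$, $F\in\mathcal A(U)$ and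 $X\in\mathfrak X^\omega(U)$, one has $F^X|_V=G^{X|_V}$ for some $G\in\mathcal A(V)$; (b) for every open $U$ and $X\in\mathfrak X^\omega(U)$, $X\in\mathcal F(U)$ if and only if $F^X\equiv0$ on $U$ for all $F\in\mathcal A(U)$. *)

theory Defs
  imports "HOL-Analysis.Analysis" "HOL-Library.Extended_Nat"
begin

definition multi_indices :: "('e::euclidean_space \<Rightarrow> nat) set" where
  "multi_indices = {\<alpha>. \<forall>i. i \<notin> Basis \<longrightarrow> \<alpha> i = 0}"

definition ranalytic_on :: "'e::euclidean_space set \<Rightarrow> ('e \<Rightarrow> real) \<Rightarrow> bool" where
  "ranalytic_on S f \<longleftrightarrow>
     (\<forall>x\<in>S. \<exists>r>0. \<exists>a :: ('e \<Rightarrow> nat) \<Rightarrow> real. \<forall>y\<in>ball x r.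
        ((\<lambda>\<alpha>. a \<alpha> * (\<Prod>b\<in>Basis. ((y - x) \<bullet> b) ^ \<alpha> b)) has_sum f y) multi_indices)"

definition vanalytic_on :: "'e::euclidean_space set \<Rightarrow> ('e \<Rightarrow> 'f::euclidean_space) \<Rightarrow> bool" where
  "vanalytic_on S f \<longleftrightarrow> (\<forall>b\<in>Basis. ranalytic_on S (\<lambda>y. f y \<bullet> b))"

primrec ck_on :: "nat \<Rightarrow> 'e::euclidean_space set \<Rightarrow> ('e \<Rightarrow> 'f::real_normed_vector) \<Rightarrow> bool" where
  "ck_on 0 S f = continuous_on S f"
| "ck_on (Suc k) S f = (continuous_on S f \<and>
      (\<exists>f'. (\<forall>x\<in>S. (f has_derivative f' x) (at x)) \<and> (\<forall>v. ck_on k S (\<lambda>x. f' x v))))"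

definition smooth_on :: "'e::euclidean_space set \<Rightarrow> ('e \<Rightarrow> 'f::real_normed_vector) \<Rightarrow> bool" where
  "smooth_on S f \<longleftrightarrow> (\<forall>k. ck_on k S f)"

text \<open>A chart is a pair (domain, coordinate map). The manifold is the whole
  topological type 'm, modelled on the Euclidean space 'e.\<close>
type_synonym ('m, 'e) chart = "'m set \<times> ('m \<Rightarrow> 'e)"

definition analytic_atlas :: "('m::topological_space, 'e::euclidean_space) chart set \<Rightarrow> bool" where
  "analytic_atlas A \<longleftrightarrow>
     (\<Union>c\<in>A. fst c) = UNIV \<and>
     (\<forall>c\<in>A. open (fst c) \<and> open (snd c ` fst c) \<and>
              (\<exists>\<psi>. homeomorphism (fst c) (snd c ` fst c) (snd c) \<psi>)) \<and>
     (\<forall>c\<in>A. \<forall>d\<in>A. vanalytic_on (snd c ` (fst c \<inter> fst d))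
                                  (snd d \<circ> inv_into (fst c) (snd c)))"

definition transition :: "('m, 'e) chart \<Rightarrow> ('m, 'e) chart \<Rightarrow> 'e \<Rightarrow> 'e" where
  "transition c d = snd d \<circ> inv_into (fst c) (snd c)"

text \<open>A (rough) vector field: for every chart c and point p its coordinate
  representation X c p; normalised to 0 outside the domain, and transforming
  with the Jacobian of the transition maps.\<close>
type_synonym ('m, 'e) vf = "('m, 'e) chart \<Rightarrow> 'm \<Rightarrow> 'e"

definition vector_field_on ::
  "('m::topological_space, 'e::euclidean_space) chart set \<Rightarrow> 'm set \<Rightarrow> ('m, 'e) vf \<Rightarrow> bool" where
  "vector_field_on A W X \<longleftrightarrow>
     (\<forall>c p. (c \<notin> A \<or> p \<notin> W \<or> p \<notin> fst c) \<longrightarrow> X c p = 0) \<and>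
     (\<forall>c\<in>A. \<forall>d\<in>A. \<forall>p\<in>W \<inter> fst c \<inter> fst d.
        \<exists>D. (transition c d has_derivative D) (at (snd c p)) \<and> X d p = D (X c p))"

definition local_rep :: "('m, 'e) vf \<Rightarrow> ('m, 'e) chart \<Rightarrow> 'e \<Rightarrow> 'e" where
  "local_rep X c = (\<lambda>y. X c (inv_into (fst c) (snd c) y))"

definition smooth_vf_on ::
  "('m::topological_space, 'e::euclidean_space) chart set \<Rightarrow> 'm set \<Rightarrow> ('m, 'e) vf \<Rightarrow> bool" where
  "smooth_vf_on A W X \<longleftrightarrow> vector_field_on A W X \<and>
     (\<forall>c\<in>A. smooth_on (snd c ` (W \<inter> fst c)) (local_rep X c))"

definition analytic_vf_on ::
  "('m::topological_space, 'e::euclidean_space) chart set \<Rightarrow> 'm set \<Rightarrow> ('m, 'e) vf \<Rightarrow> bool" where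
  "analytic_vf_on A W X \<longleftrightarrow> vector_field_on A W X \<and>
     (\<forall>c\<in>A. vanalytic_on (snd c ` (W \<inter> fst c)) (local_rep X c))"

definition analytic_fun_on ::
  "('m::topological_space, 'e::euclidean_space) chart set \<Rightarrow> 'm set \<Rightarrow> ('m \<Rightarrow> real) \<Rightarrow> bool" where
  "analytic_fun_on A W f \<longleftrightarrow>
     (\<forall>c\<in>A. ranalytic_on (snd c ` (W \<inter> fst c)) (f \<circ> inv_into (fst c) (snd c)))"

definition zero_vf :: "('m, 'e::real_vector) vf" where
  "zero_vf = (\<lambda>c p. 0)"

definition restrict_vf :: "'m set \<Rightarrow> ('m, 'e::real_vector) vf \<Rightarrow> ('m, 'e) vf" where
  "restrict_vf V X = (\<lambda>c p. if p \<in> V then X c p else 0)"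

text \<open>F U is only meaningful for connected open U.\<close>
definition sheaf_lvf ::
  "('m::topological_space, 'e::euclidean_space) chart set \<Rightarrow> ('m set \<Rightarrow> ('m, 'e) vf set) \<Rightarrow> bool" where
  "sheaf_lvf A F \<longleftrightarrow>
     (\<forall>U. connected U \<and> open U \<longrightarrow>
        F U \<subseteq> {X. smooth_vf_on A U X} \<and> zero_vf \<in> F U \<and>
        (\<forall>X\<in>F U. \<forall>Y\<in>F U. (\<lambda>c p. X c p + Y c p) \<in> F U) \<and>
        (\<forall>X\<in>F U. \<forall>r::real. (\<lambda>c p. r *\<^sub>R X c p) \<in> F U)) \<and>
     (\<forall>U V X. connected U \<and> open U \<and> connected V \<and> open V \<and> V \<subseteq> U \<and> X \<in> F U
        \<longrightarrow> restrict_vf V X \<in> F V) \<and>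
     (\<forall>U \<U> Xs. connected U \<and> open U \<and> \<Union>\<U> = U \<and>
        (\<forall>W\<in>\<U>. connected W \<and> open W \<and> Xs W \<in> F W) \<and>
        (\<forall>W1\<in>\<U>. \<forall>W2\<in>\<U>. \<forall>c. \<forall>p\<in>W1 \<inter> W2. Xs W1 c p = Xs W2 c p)
        \<longrightarrow> (\<exists>X\<in>F U. \<forall>W\<in>\<U>. restrict_vf W X = Xs W))"

definition vf_lin_indep :: "nat \<Rightarrow> (nat \<Rightarrow> ('m, 'e::real_vector) vf) \<Rightarrow> bool" where
  "vf_lin_indep k Xs \<longleftrightarrow>
     (\<forall>a::nat \<Rightarrow> real. (\<lambda>c p. \<Sum>i<k. a i *\<^sub>R Xs i c p) = zero_vf \<longrightarrow> (\<forall>i<k. a i = 0))"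

definition unique_continuation :: "('m::topological_space set \<Rightarrow> ('m, 'e::real_vector) vf set) \<Rightarrow> bool" where
  "unique_continuation F \<longleftrightarrow>
     (\<forall>U X W. connected U \<and> open U \<and> X \<in> F U \<and> open W \<and> W \<noteq> {} \<and> W \<subseteq> U \<and>
        (\<forall>c. \<forall>p\<in>W. X c p = 0) \<longrightarrow> X = zero_vf)"

definition bounded_rank :: "('m::topological_space set \<Rightarrow> ('m, 'e::real_vector) vf set) \<Rightarrow> bool" where
  "bounded_rank F \<longleftrightarrow>
     (\<exists>N::nat. \<forall>U. connected U \<and> open U \<longrightarrow>
        (\<forall>k Xs. (\<forall>i<k. Xs i \<in> F U) \<and> vf_lin_indep k Xs \<longrightarrow> k \<le> N))"

definition admissible ::
  "('m::topological_space, 'e::euclidean_space) chart set \<Rightarrow> ('m set \<Rightarrow> ('m, 'e) vf set) \<Rightarrow> bool" where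
  "admissible A F \<longleftrightarrow> sheaf_lvf A F \<and> unique_continuation F \<and> bounded_rank F"

definition germ_at :: "'m::topological_space \<Rightarrow> ('m, 'e) vf \<Rightarrow> ('m, 'e) vf set" where
  "germ_at q X = {Y. \<exists>V. open V \<and> q \<in> V \<and> (\<forall>c. \<forall>p\<in>V. Y c p = X c p)}"

definition germs :: "('m::topological_space set \<Rightarrow> ('m, 'e) vf set) \<Rightarrow> 'm \<Rightarrow> ('m, 'e) vf set set" where
  "germs F q = {germ_at q X | U X. connected U \<and> open U \<and> q \<in> U \<and> X \<in> F U}"

definition germ_lin_indep :: "'m::topological_space \<Rightarrow> nat \<Rightarrow> (nat \<Rightarrow> ('m, 'e::real_vector) vf) \<Rightarrow> bool" where
  "germ_lin_indep q k Xs \<longleftrightarrow>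
     (\<forall>a::nat \<Rightarrow> real. germ_at q (\<lambda>c p. \<Sum>i<k. a i *\<^sub>R Xs i c p) = germ_at q zero_vf
        \<longrightarrow> (\<forall>i<k. a i = 0))"

text \<open>kappa^F_q = dim G^F_q (supremum of sizes of independent families of germs).\<close>
definition kappa :: "('m::topological_space set \<Rightarrow> ('m, 'e::real_vector) vf set) \<Rightarrow> 'm \<Rightarrow> enat" where
  "kappa F q = Sup {enat k | k. \<exists>Us Xs. (\<forall>i<k. connected (Us i) \<and> open (Us i) \<and> q \<in> Us i \<and>
                                     Xs i \<in> F (Us i)) \<and> germ_lin_indep q k Xs}"

definition regular ::
  "('m::topological_space, 'e::euclidean_space) chart set \<Rightarrow> ('m set \<Rightarrow> ('m, 'e) vf set) \<Rightarrow> bool" where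
  "regular A F \<longleftrightarrow> admissible A F \<and> (\<exists>k0. \<forall>q. kappa F q = k0)"

definition real_analytic_sheaf ::
  "('m::topological_space, 'e::euclidean_space) chart set \<Rightarrow> ('m set \<Rightarrow> ('m, 'e) vf set) \<Rightarrow> bool" where
  "real_analytic_sheaf A F \<longleftrightarrow>
     (\<forall>U. connected U \<and> open U \<longrightarrow> F U \<subseteq> {X. analytic_vf_on A U X})"

text \<open>Sections of the sheaf over an arbitrary (possibly disconnected) open U.\<close>
definition sheaf_sections :: "('m::topological_space set \<Rightarrow> ('m, 'e::real_vector) vf set) \<Rightarrow> 'm set \<Rightarrow> ('m, 'e) vf set" where
  "sheaf_sections F U = {X. \<forall>V. connected V \<and> open V \<and> V \<subseteq> U \<longrightarrow> restrict_vf V X \<in> F V}"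

definition analytically_determined ::
  "('m::topological_space, 'e::euclidean_space) chart set \<Rightarrow> ('m set \<Rightarrow> ('m, 'e) vf set) \<Rightarrow> bool" where
  "analytically_determined A F \<longleftrightarrow> real_analytic_sheaf A F \<and>
     (\<exists>\<A> :: 'm set \<Rightarrow> (('m, 'e) vf \<Rightarrow> ('m \<Rightarrow> real)) set.
        (\<forall>U. open U \<longrightarrow> (\<forall>\<Phi>\<in>\<A> U. \<forall>X. analytic_vf_on A U X \<longrightarrow> analytic_fun_on A U (\<Phi> X))) \<and>
        (\<forall>U V \<Phi> X. open U \<and> open V \<and> V \<subseteq> U \<and> \<Phi> \<in> \<A> U \<and> analytic_vf_on A U X \<longrightarrow>
            (\<exists>G\<in>\<A> V. \<forall>p\<in>V. \<Phi> X p = G (restrict_vf V X) p)) \<and>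
        (\<forall>U X. open U \<and> analytic_vf_on A U X \<longrightarrow>
            (X \<in> sheaf_sections F U \<longleftrightarrow> (\<forall>\<Phi>\<in>\<A> U. \<forall>p\<in>U. \<Phi> X p = 0))))"

end

theory Submission
  imports Defs "HOL-Complex_Analysis.Complex_Analysis" "HOL-Computational_Algebra.Polynomial"
begin


lemma frac_lt1: "(x::real) \<ge> 0 \<Longrightarrow> x/(x+1) < 1"
  by (simp add: divide_less_eq)

lemma powser_identity_1d:
  fixes c :: "nat \<Rightarrow> real" and R tz \<delta> :: real
  assumes sm: "\<And>t. \<bar>t\<bar> < R \<Longrightarrow> summable (\<lambda>n. c n * t^n)"
    and z: "\<And>t. \<bar>t - tz\<bar> < \<delta> \<Longrightarrow> (\<Sum>n. c n * t^n) = 0"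
    and tz: "\<bar>tz\<bar> < R" and d: "\<delta> > 0"
  shows "c n = 0"
proof -
  define F where "F = Abs_fps (\<lambda>n. complex_of_real (c n))"
  have rad: "fps_conv_radius F \<ge> ereal R"
    unfolding fps_conv_radius_def
  proof (rule conv_radius_geI_ex')
    fix r :: real assume "0 < r" "ereal r < ereal R"
    then have "summable (\<lambda>n. c n * r^n)" using sm by auto
    then have "summable (\<lambda>n. complex_of_real (c n * r^n))" by (simp only: summable_complex_of_real)
    moreover have "(\<lambda>n. complex_of_real (c n * r^n)) = (\<lambda>n. complex_of_real (c n) * of_real r ^ n)" by simp
    ultimately show "summable (\<lambda>n. fps_nth F n * of_real r ^ n)" by (simp add: F_def)
  qed
  define S where "S = ball (0::complex) R"
  have hol: "eval_fps F holomorphic_on S"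
    by (rule holomorphic_on_eval_fps) (use rad in \<open>auto simp: S_def eball_def dist_norm intro: less_le_trans[of _ "ereal R"]\<close>)
  have ev: "eval_fps F (of_real t) = of_real (\<Sum>n. c n * t^n)" if "\<bar>t\<bar> < R" for t
  proof -
    have "eval_fps F (of_real t) = (\<Sum>n. complex_of_real (c n * t^n))"
      by (simp add: eval_fps_def F_def)
    also have "\<dots> = of_real (\<Sum>n. c n * t^n)"
      by (rule suminf_of_real[OF sm[OF that], symmetric])
    finally show ?thesis .
  qed
  define \<delta>' where "\<delta>' = min \<delta> (R - \<bar>tz\<bar>)"
  have d': "\<delta>' > 0" using d tz by (simp add: \<delta>'_def)
  define U :: "complex set" where "U = of_real ` {t. \<bar>t - tz\<bar> < \<delta>'}"
  have US: "U \<subseteq> S"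
    by (auto simp: U_def S_def \<delta>'_def dist_norm)
  have U0: "eval_fps F z = 0" if "z \<in> U" for z
  proof -
    from that obtain t where t: "\<bar>t - tz\<bar> < \<delta>'" "z = of_real t" by (auto simp: U_def)
    then have "\<bar>t\<bar> < R" "\<bar>t - tz\<bar> < \<delta>" by (auto simp: \<delta>'_def)
    then show ?thesis using t ev z by simp
  qed
  have lim: "of_real tz islimpt U"
  proof (rule islimpt_approachable[THEN iffD2], intro allI impI)
    fix e :: real assume e: "e > 0"
    define t where "t = tz + min e \<delta>' / 2"
    have "\<bar>t - tz\<bar> < \<delta>'" using d' e by (auto simp: t_def)
    then have "of_real t \<in> U" unfolding U_def by blast
    moreover have "of_real t \<noteq> (of_real tz :: complex)" using d' e by (simp add: t_def)
    moreover have "dist (of_real t) (of_real tz :: complex) < e" using d' e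
      by (simp add: t_def dist_norm norm_of_real[symmetric] of_real_diff[symmetric] del: of_real_diff)
    ultimately show "\<exists>x'\<in>U. x' \<noteq> of_real tz \<and> dist x' (of_real tz) < e" by blast
  qed
  have all0: "eval_fps F w = 0" if "w \<in> S" for w
    by (rule analytic_continuation[OF hol _ _ US _ lim U0 that])
       (use tz in \<open>auto simp: S_def\<close>)
  have Rpos: "R > 0" using tz by linarith
  have e1: "eval_fps F has_fps_expansion F"
    by (rule eval_fps_has_fps_expansion) (use rad Rpos in \<open>auto intro: less_le_trans[of _ "ereal R"]\<close>)
  have "eventually (\<lambda>z. z \<in> S) (nhds 0)"
    by (rule eventually_nhds_in_open) (use Rpos in \<open>auto simp: S_def\<close>)
  then have "eventually (\<lambda>z. eval_fps 0 z = eval_fps F z) (nhds 0)"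
    by eventually_elim (simp add: all0)
  then have e2: "eval_fps F has_fps_expansion 0"
    by (simp add: has_fps_expansion_def)
  have "F = 0" by (rule fps_expansion_unique_complex[OF e1 e2])
  then have "fps_nth F n = 0" by simp
  then show ?thesis by (simp add: F_def)
qed

definition mdeg :: "('e::euclidean_space \<Rightarrow> nat) \<Rightarrow> nat" where
  "mdeg \<alpha> = (\<Sum>b\<in>Basis. \<alpha> b)"
definition MI :: "nat \<Rightarrow> ('e::euclidean_space \<Rightarrow> nat) set" where
  "MI n = {\<alpha>\<in>multi_indices. mdeg \<alpha> = n}"
definition mpow :: "'e::euclidean_space \<Rightarrow> ('e \<Rightarrow> nat) \<Rightarrow> real" where
  "mpow v \<alpha> = (\<Prod>b\<in>Basis. (v \<bullet> b) ^ \<alpha> b)"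
definition cf :: "(('e::euclidean_space \<Rightarrow> nat) \<Rightarrow> real) \<Rightarrow> nat \<Rightarrow> 'e \<Rightarrow> real" where
  "cf a n v = (\<Sum>\<alpha>\<in>MI n. a \<alpha> * mpow v \<alpha>)"

lemma finite_MI: "finite (MI n)"
proof -
  have "MI n \<subseteq> (\<lambda>f i. if i \<in> Basis then f i else 0) ` (Basis \<rightarrow>\<^sub>E {..n})"
  proof
    fix \<alpha> assume a: "\<alpha> \<in> MI n"
    then have z: "\<And>i. i \<notin> Basis \<Longrightarrow> \<alpha> i = 0" by (auto simp: MI_def multi_indices_def)
    have le: "\<alpha> b \<le> n" if "b \<in> Basis" for b
      using a that member_le_sum[of b Basis \<alpha>] by (auto simp: MI_def mdeg_def)
    have "restrict \<alpha> Basis \<in> Basis \<rightarrow>\<^sub>E {..n}" using le by auto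
    moreover have "\<alpha> = (\<lambda>i. if i \<in> Basis then restrict \<alpha> Basis i else 0)"
      using z by (auto simp: fun_eq_iff)
    ultimately show "\<alpha> \<in> (\<lambda>f i. if i \<in> Basis then f i else 0) ` (Basis \<rightarrow>\<^sub>E {..n})" by blast
  qed
  then show ?thesis by (rule finite_subset) (intro finite_imageI finite_PiE; simp)
qed

lemma mpow_scale: "mpow (t *\<^sub>R v) \<alpha> = t ^ mdeg \<alpha> * mpow v \<alpha>"
  by (simp add: mpow_def mdeg_def inner_scaleR_left power_mult_distrib prod.distrib power_sum)

lemma regroup:
  fixes T :: "('e::euclidean_space \<Rightarrow> nat) \<Rightarrow> real"
  assumes "(T has_sum s) multi_indices"
  shows "(\<lambda>n. \<Sum>\<alpha>\<in>MI n. T \<alpha>) sums s"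
proof -
  have "((\<lambda>(n,\<alpha>). T \<alpha>) has_sum s) (Sigma UNIV MI)"
  proof -
    have "(T has_sum s) multi_indices = ((\<lambda>(n,\<alpha>). T \<alpha>) has_sum s) (Sigma UNIV MI)"
      by (rule has_sum_reindex_bij_witness[where j = "\<lambda>\<alpha>. (mdeg \<alpha>, \<alpha>)" and i = snd])
         (auto simp: MI_def)
    with assms show ?thesis by simp
  qed
  then have "((\<lambda>n. \<Sum>\<alpha>\<in>MI n. T \<alpha>) has_sum s) UNIV"
    by (rule has_sum_Sigma') (simp add: finite_MI)
  then show ?thesis by (rule has_sum_imp_sums)
qed

lemma line_sums:
  fixes a :: "('e::euclidean_space \<Rightarrow> nat) \<Rightarrow> real"
  assumes H: "\<And>y. y \<in> ball x r \<Longrightarrow> ((\<lambda>\<alpha>. a \<alpha> * (\<Prod>b\<in>Basis. ((y - x) \<bullet> b) ^ \<alpha> b)) has_sum g y) multi_indices"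
    and tv: "\<bar>t\<bar> * norm v < r"
  shows "(\<lambda>n. cf a n v * t^n) sums g (x + t *\<^sub>R v)"
proof -
  have "x + t *\<^sub>R v \<in> ball x r" using tv by (simp add: dist_norm)
  from regroup[OF H[OF this]]
  have "(\<lambda>n. \<Sum>\<alpha>\<in>MI n. a \<alpha> * mpow (t *\<^sub>R v) \<alpha>) sums g (x + t *\<^sub>R v)"
    by (simp add: mpow_def)
  moreover have "(\<Sum>\<alpha>\<in>MI n. a \<alpha> * mpow (t *\<^sub>R v) \<alpha>) = cf a n v * t^n" for n
    unfolding cf_def sum_distrib_right
    by (rule sum.cong) (auto simp: mpow_scale MI_def)
  ultimately show ?thesis by simp
qed

lemma cf_poly:
  "cf a n (u + t *\<^sub>R d) = poly (\<Sum>\<alpha>\<in>MI n. smult (a \<alpha>) (\<Prod>b\<in>Basis. [:u \<bullet> b, d \<bullet> b:] ^ \<alpha> b)) t"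
  by (simp add: cf_def mpow_def poly_sum poly_prod inner_add_left inner_scaleR_left algebra_simps)

lemma local_identity:
  fixes a :: "('e::euclidean_space \<Rightarrow> nat) \<Rightarrow> real"
  assumes H: "\<And>y. y \<in> ball x r \<Longrightarrow> ((\<lambda>\<alpha>. a \<alpha> * (\<Prod>b\<in>Basis. ((y - x) \<bullet> b) ^ \<alpha> b)) has_sum g y) multi_indices"
    and y0: "y0 \<in> ball x r" and e: "\<epsilon> > 0" and Z: "\<And>y. y \<in> ball y0 \<epsilon> \<Longrightarrow> g y = 0"
    and z: "z \<in> ball x r"
  shows "g z = 0"
proof -
  define v0 where "v0 = y0 - x"
  have nv0: "norm v0 < r" using y0 by (simp add: v0_def dist_norm norm_minus_commute)
  have r: "r > 0" using nv0 by (smt (verit) norm_ge_zero)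
  define \<epsilon>1 where "\<epsilon>1 = min (\<epsilon>/2) ((r - norm v0)/2)"
  have e1: "\<epsilon>1 > 0" using e nv0 by (simp add: \<epsilon>1_def)
  have K: "cf a n v = 0" if v: "v \<in> ball v0 \<epsilon>1" for v n
  proof -
    have nvv: "norm (v - v0) < \<epsilon>1" using v by (simp add: dist_norm norm_minus_commute)
    have nv: "norm v < r"
    proof -
      have "\<epsilon>1 \<le> (r - norm v0)/2" unfolding \<epsilon>1_def by (rule min.cobounded2)
      then show ?thesis using e1 nvv norm_triangle_ineq[of "v - v0" v0] by simp
    qed
    define m where "m = max (norm v) (r/2)"
    have m: "m > 0" "m < r" "norm v \<le> m" using nv r by (auto simp: m_def)
    define R where "R = r / m"
    have R1: "R > 1" using m by (simp add: R_def)
    have tvR: "\<bar>t\<bar> * norm v < r" if "\<bar>t\<bar> < R" for t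
    proof -
      have "\<bar>t\<bar> * norm v \<le> \<bar>t\<bar> * m" using m by (simp add: mult_left_mono)
      also have "\<dots> < R * m" using m that by simp
      also have "\<dots> = r" using m by (simp add: R_def)
      finally show ?thesis .
    qed
    define \<delta> where "\<delta> = min (\<epsilon>/(2*(norm v+1))) (R - 1)"
    have "\<epsilon>/(2*(norm v+1)) > 0" using e by (intro divide_pos_pos) (auto intro: add_nonneg_pos)
    then have d: "\<delta> > 0" using R1 by (simp add: \<delta>_def)
    show ?thesis
    proof (rule powser_identity_1d[where R = R and tz = 1 and \<delta> = \<delta>])
      fix t :: real assume "\<bar>t\<bar> < R"
      then show "summable (\<lambda>n. cf a n v * t^n)"
        using line_sums[OF H tvR] sums_summable by blast
    next
      fix t :: real assume t: "\<bar>t - 1\<bar> < \<delta>"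
      then have tR: "\<bar>t\<bar> < R" using R1 unfolding \<delta>_def by (auto simp: abs_less_iff)
      have "(\<lambda>n. cf a n v * t^n) sums g (x + t *\<^sub>R v)" by (rule line_sums[OF H tvR[OF tR]])
      moreover have "x + t *\<^sub>R v \<in> ball y0 \<epsilon>"
      proof -
        have "norm (t *\<^sub>R v - v) = \<bar>t - 1\<bar> * norm v"
          by (metis norm_scaleR scaleR_diff_left scaleR_one)
        also have "\<dots> \<le> \<delta> * norm v" using t by (simp add: mult_right_mono)
        also have "\<dots> \<le> (\<epsilon>/(2*(norm v+1))) * norm v" unfolding \<delta>_def by (intro mult_right_mono min.cobounded1) auto
        also have "\<dots> \<le> \<epsilon>/2"
        proof -
          have "(\<epsilon>/(2*(norm v+1))) * norm v = (\<epsilon>/2) * (norm v / (norm v + 1))" by simp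
          also have "\<dots> \<le> (\<epsilon>/2) * 1" using e frac_lt1[of "norm v"] by (intro mult_left_mono) auto
          finally show ?thesis by simp
        qed
        finally have a1: "norm (t *\<^sub>R v - v) \<le> \<epsilon>/2" .
        have a2: "norm (v - v0) < \<epsilon>/2" using nvv by (simp add: \<epsilon>1_def)
        have "dist y0 (x + t *\<^sub>R v) = norm ((t *\<^sub>R v - v) + (v - v0))"
          by (simp add: dist_norm v0_def norm_minus_commute algebra_simps)
        also have "\<dots> \<le> norm (t *\<^sub>R v - v) + norm (v - v0)" by (rule norm_triangle_ineq)
        also have "\<dots> < \<epsilon>" using a1 a2 by simp
        finally show ?thesis by simp
      qed
      ultimately show "(\<Sum>n. cf a n v * t^n) = 0" using Z sums_unique by metis
    qed (use R1 d in auto)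
  qed
  have K2: "cf a n w = 0" for n w
  proof -
    define P where "P = (\<Sum>\<alpha>\<in>MI n. smult (a \<alpha>) (\<Prod>b\<in>Basis. [:v0 \<bullet> b, (w - v0) \<bullet> b:] ^ \<alpha> b))"
    have P: "poly P t = cf a n (v0 + t *\<^sub>R (w - v0))" for t
      by (simp add: P_def cf_poly)
    define \<eta> where "\<eta> = \<epsilon>1 / (norm (w - v0) + 1)"
    have eta: "\<eta> > 0" using e1 unfolding \<eta>_def by (intro divide_pos_pos) (auto intro: add_nonneg_pos)
    have "{-\<eta><..<\<eta>} \<subseteq> {t. poly P t = 0}"
    proof
      fix t assume t: "t \<in> {-\<eta><..<\<eta>}"
      have "norm (t *\<^sub>R (w - v0)) = \<bar>t\<bar> * norm (w - v0)" by simp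
      also have "\<dots> \<le> \<eta> * norm (w - v0)" using t by (intro mult_right_mono) auto
      also have "\<dots> < \<epsilon>1"
      proof -
        have "\<eta> * norm (w - v0) = \<epsilon>1 * (norm (w - v0) / (norm (w - v0) + 1))" by (simp add: \<eta>_def)
        also have "\<dots> < \<epsilon>1 * 1" using e1 frac_lt1[of "norm (w - v0)"] by (intro mult_strict_left_mono) auto
        finally show ?thesis by simp
      qed
      finally have "v0 + t *\<^sub>R (w - v0) \<in> ball v0 \<epsilon>1" by (simp add: dist_norm)
      then show "t \<in> {t. poly P t = 0}" using K P by simp
    qed
    moreover have "infinite {-\<eta><..<\<eta>}" using eta by simp
    ultimately have "infinite {t. poly P t = 0}" using finite_subset by blast
    then have "P = 0" using poly_roots_finite by blast
    then have "poly P 1 = 0" by simp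
    then show ?thesis using P[of 1] by simp
  qed
  have nz: "\<bar>1::real\<bar> * norm (z - x) < r" using z by (simp add: dist_norm norm_minus_commute)
  have "(\<lambda>n. cf a n (z - x) * 1^n) sums g (x + (1::real) *\<^sub>R (z - x))"
    by (rule line_sums[OF H nz])
  then have "(\<lambda>n. 0) sums g z" using K2 by simp
  then show ?thesis using sums_zero sums_unique2 by metis
qed

lemma chart_basic:
  assumes "analytic_atlas A" "c \<in> A"
  shows "open (fst c)" "open (snd c ` fst c)" "inj_on (snd c) (fst c)"
    "continuous_on (fst c) (snd c)"
    "\<exists>\<psi>. homeomorphism (fst c) (snd c ` fst c) (snd c) \<psi>"
proof -
  from assms obtain \<psi> where h: "homeomorphism (fst c) (snd c ` fst c) (snd c) \<psi>"
    unfolding analytic_atlas_def by blast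
  show "open (fst c)" "open (snd c ` fst c)" using assms unfolding analytic_atlas_def by auto
  show "inj_on (snd c) (fst c)" using h unfolding homeomorphism_def by (metis inj_on_inverseI)
  show "continuous_on (fst c) (snd c)" using h by (rule homeomorphism_cont1)
  show "\<exists>\<psi>. homeomorphism (fst c) (snd c ` fst c) (snd c) \<psi>" using h by blast
qed

lemma chart_cover:
  fixes A :: "('m::topological_space, 'e::euclidean_space) chart set"
  assumes "analytic_atlas A" obtains c where "c \<in> A" "q \<in> fst c"
  using assms unfolding analytic_atlas_def by blast

lemma chart_inv:
  assumes "analytic_atlas A" "c \<in> A" "z \<in> fst c"
  shows "inv_into (fst c) (snd c) (snd c z) = z"
  using chart_basic(3)[OF assms(1,2)] assms(3) by (simp add: inv_into_f_f)

lemma chart_open_image: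
  assumes "analytic_atlas A" "c \<in> A" "open T" "T \<subseteq> fst c"
  shows "open (snd c ` T)"
proof -
  obtain \<psi> where h: "homeomorphism (fst c) (snd c ` fst c) (snd c) \<psi>"
    using chart_basic(5)[OF assms(1,2)] by blast
  have "openin (top_of_set (fst c)) T" using assms(3,4) by (simp add: openin_open_Int Int_absorb1 openin_subtopology_Int_subset openin_open) (metis inf.absorb_iff2)
  then have "openin (top_of_set (snd c ` fst c)) (snd c ` T)"
    by (rule homeomorphism_imp_open_map[OF h])
  then show ?thesis using chart_basic(2)[OF assms(1,2)] openin_open_trans by blast
qed

lemma chart_open_preimage:
  assumes "analytic_atlas A" "c \<in> A" "open B"
  shows "open {z \<in> fst c. snd c z \<in> B}"
proof -
  have "open (snd c -` B \<inter> fst c)"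
    using chart_basic(1,4)[OF assms(1,2)] assms(3) continuous_on_open_vimage by blast
  moreover have "snd c -` B \<inter> fst c = {z \<in> fst c. snd c z \<in> B}" by auto
  ultimately show ?thesis by simp
qed

lemma locally_connected_atlas:
  fixes A :: "('m::topological_space, 'e::euclidean_space) chart set" and q :: 'm
  assumes A: "analytic_atlas A" and U: "open U" "q \<in> U"
  shows "\<exists>W. connected W \<and> open W \<and> q \<in> W \<and> W \<subseteq> U"
proof -
  obtain c where c: "c \<in> A" "q \<in> fst c" using chart_cover[OF A] by blast
  obtain \<psi> where h: "homeomorphism (fst c) (snd c ` fst c) (snd c) \<psi>"
    using chart_basic(5)[OF A c(1)] by blast
  have "open (snd c ` (U \<inter> fst c))"
    using chart_open_image[OF A c(1)] chart_basic(1)[OF A c(1)] U by auto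
  moreover have "snd c q \<in> snd c ` (U \<inter> fst c)" using U c by auto
  ultimately obtain e where e: "e > 0" "ball (snd c q) e \<subseteq> snd c ` (U \<inter> fst c)"
    using open_contains_ball by blast
  define W where "W = {z \<in> fst c. snd c z \<in> ball (snd c q) e}"
  have "open W" unfolding W_def by (rule chart_open_preimage[OF A c(1)]) simp
  moreover have "q \<in> W" using c e by (simp add: W_def)
  moreover have "W \<subseteq> U"
  proof
    fix z assume z: "z \<in> W"
    then obtain z' where "z' \<in> U \<inter> fst c" "snd c z = snd c z'" using e(2) by (auto simp: W_def)
    then show "z \<in> U" using chart_basic(3)[OF A c(1)] z by (auto simp: W_def inj_on_def)
  qed
  moreover have "connected W"
  proof -
    have "W = \<psi> ` ball (snd c q) e"
    proof
      show "W \<subseteq> \<psi> ` ball (snd c q) e"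
        using h by (force simp: W_def homeomorphism_def)
      show "\<psi> ` ball (snd c q) e \<subseteq> W"
      proof
        fix z assume "z \<in> \<psi> ` ball (snd c q) e"
        then obtain y where y: "y \<in> ball (snd c q) e" "z = \<psi> y" by blast
        then have "y \<in> snd c ` fst c" using e(2) by auto
        then show "z \<in> W" using h y by (auto simp: W_def homeomorphism_def)
      qed
    qed
    moreover have "continuous_on (ball (snd c q) e) \<psi>"
      using h e(2) by (meson continuous_on_subset homeomorphism_cont2 image_mono inf_le2 subset_trans)
    ultimately show ?thesis using connected_continuous_image connected_ball by blast
  qed
  ultimately show ?thesis by blast
qed

lemma open_component_atlas:
  fixes A :: "('m::topological_space, 'e::euclidean_space) chart set" and p :: 'm
  assumes A: "analytic_atlas A" and V: "open V"
  shows "open (connected_component_set V p)"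
proof (subst open_subopen, intro ballI)
  fix x assume x: "x \<in> connected_component_set V p"
  then have xV: "x \<in> V" using connected_component_subset by blast
  obtain W where W: "connected W" "open W" "x \<in> W" "W \<subseteq> V"
    using locally_connected_atlas[OF A V xV] by blast
  have "W \<subseteq> connected_component_set V x" by (rule connected_component_maximal) (use W in auto)
  also have "\<dots> = connected_component_set V p" using x connected_component_eq by metis
  finally show "\<exists>T. open T \<and> x \<in> T \<and> T \<subseteq> connected_component_set V p" using W by blast
qed

lemma identity_manifold:
  fixes A :: "('m::topological_space, 'e::euclidean_space) chart set" and f :: "'m \<Rightarrow> real"
  assumes A: "analytic_atlas A" and C: "connected C" "open C" and fa: "analytic_fun_on A C f"
    and W: "open W" "W \<noteq> {}" "W \<subseteq> C" "\<And>z. z \<in> W \<Longrightarrow> f z = 0"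
  shows "\<forall>z\<in>C. f z = 0"
proof -
  define Z where "Z = {x\<in>C. \<exists>N. open N \<and> x \<in> N \<and> (\<forall>z\<in>N. f z = 0)}"
  have Zopen: "open Z"
  proof (subst open_subopen, intro ballI)
    fix x assume "x \<in> Z"
    then obtain N where N: "open N" "x \<in> N" "\<forall>z\<in>N. f z = 0" "x \<in> C" by (auto simp: Z_def)
    have "N \<inter> C \<subseteq> Z" using N C(2) by (auto simp: Z_def)
    then show "\<exists>T. open T \<and> x \<in> T \<and> T \<subseteq> Z" using N C(2) by blast
  qed
  have WZ: "W \<subseteq> Z" using W by (auto simp: Z_def)
  have closedZ: "x \<in> Z" if x: "x \<in> C" and nb: "\<And>N. open N \<Longrightarrow> x \<in> N \<Longrightarrow> N \<inter> Z \<noteq> {}" for x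
  proof -
    obtain c where c: "c \<in> A" "x \<in> fst c" using chart_cover[OF A] by blast
    define S where "S = snd c ` (C \<inter> fst c)"
    define g where "g = f \<circ> inv_into (fst c) (snd c)"
    have Sopen: "open S" unfolding S_def
      by (rule chart_open_image[OF A c(1)]) (use C chart_basic(1)[OF A c(1)] in auto)
    have xS: "snd c x \<in> S" using x c by (auto simp: S_def)
    have "ranalytic_on S g" using fa c(1) by (simp add: analytic_fun_on_def S_def g_def)
    then obtain r a where r: "r > 0" and H0: "\<And>y. y \<in> ball (snd c x) r \<Longrightarrow>
       ((\<lambda>\<alpha>. a \<alpha> * (\<Prod>b\<in>Basis. ((y - snd c x) \<bullet> b) ^ \<alpha> b)) has_sum g y) multi_indices"
      using xS unfolding ranalytic_on_def by blast
    obtain e where e: "e > 0" "ball (snd c x) e \<subseteq> S" using Sopen xS open_contains_ball by blast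
    define r' where "r' = min r e"
    have r': "r' > 0" using r e by (simp add: r'_def)
    have H: "((\<lambda>\<alpha>. a \<alpha> * (\<Prod>b\<in>Basis. ((y - snd c x) \<bullet> b) ^ \<alpha> b)) has_sum g y) multi_indices"
      if "y \<in> ball (snd c x) r'" for y
      using H0 that by (simp add: r'_def)
    define N where "N = {z \<in> fst c. snd c z \<in> ball (snd c x) r'}"
    have Nopen: "open N" unfolding N_def by (rule chart_open_preimage[OF A c(1)]) simp
    have xN: "x \<in> N" using c r' by (simp add: N_def)
    obtain z0 where z0: "z0 \<in> N" "z0 \<in> Z" using nb[OF Nopen xN] by blast
    then obtain N0 where N0: "open N0" "z0 \<in> N0" "\<forall>z\<in>N0. f z = 0" by (auto simp: Z_def)
    have O: "open (snd c ` (N0 \<inter> N))"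
      by (rule chart_open_image[OF A c(1)]) (use N0 Nopen in \<open>auto simp: N_def\<close>)
    have "snd c z0 \<in> snd c ` (N0 \<inter> N)" using z0 N0 by auto
    then obtain \<epsilon> where \<epsilon>: "\<epsilon> > 0" "ball (snd c z0) \<epsilon> \<subseteq> snd c ` (N0 \<inter> N)"
      using O open_contains_ball by blast
    have gz: "g y = 0" if yb: "y \<in> ball (snd c z0) \<epsilon>" for y
    proof -
      obtain z where z: "z \<in> N0 \<inter> N" "y = snd c z" using \<epsilon> yb by blast
      then have "z \<in> fst c" by (simp add: N_def)
      then have "g y = f z" using z chart_inv[OF A c(1)] by (simp add: g_def)
      then show ?thesis using z N0 by simp
    qed
    have y0: "snd c z0 \<in> ball (snd c x) r'" using z0 by (simp add: N_def)
    have "\<forall>z\<in>N. f z = 0"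
    proof
      fix z assume z: "z \<in> N"
      then have "g (snd c z) = 0"
        using local_identity[OF H y0 \<epsilon>(1) gz] by (simp add: N_def)
      moreover have "g (snd c z) = f z" using z chart_inv[OF A c(1)] by (simp add: g_def N_def)
      ultimately show "f z = 0" by simp
    qed
    then show "x \<in> Z" using Nopen xN x by (auto simp: Z_def)
  qed
  have "open (\<Union>{N. open N \<and> N \<inter> Z = {}})" by auto
  define Y where "Y = \<Union>{N. open N \<and> N \<inter> Z = {}}"
  have Yopen: "open Y" by (auto simp: Y_def)
  have cover: "C \<subseteq> Z \<union> Y"
  proof
    fix x assume x: "x \<in> C"
    show "x \<in> Z \<union> Y"
    proof (cases "x \<in> Z")
      case False
      then obtain N where "open N" "x \<in> N" "N \<inter> Z = {}" using closedZ[OF x] by blast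
      then show ?thesis by (auto simp: Y_def)
    qed simp
  qed
  have disj: "Z \<inter> Y \<inter> C = {}" by (auto simp: Y_def)
  have "Z \<inter> C \<noteq> {}" using W WZ by auto
  then have "Y \<inter> C = {}" using connectedD[OF C(1) Zopen Yopen disj cover] by blast
  then have "C \<subseteq> Z" using cover by blast
  then show ?thesis by (auto simp: Z_def)
qed

lemma ranalytic_mono:
  assumes f: "ranalytic_on S f" and T: "open T" "T \<subseteq> S" and eq: "\<And>y. y \<in> T \<Longrightarrow> g y = f y"
  shows "ranalytic_on T g"
  unfolding ranalytic_on_def
proof
  fix x assume x: "x \<in> T"
  obtain r a where r: "r > 0" and H: "\<forall>y\<in>ball x r.
      ((\<lambda>\<alpha>. a \<alpha> * (\<Prod>b\<in>Basis. ((y - x) \<bullet> b) ^ \<alpha> b)) has_sum f y) multi_indices"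
    using f x T(2) unfolding ranalytic_on_def by blast
  obtain e where e: "e > 0" "ball x e \<subseteq> T" using T(1) x open_contains_ball by blast
  show "\<exists>r>0. \<exists>a. \<forall>y\<in>ball x r.
      ((\<lambda>\<alpha>. a \<alpha> * (\<Prod>b\<in>Basis. ((y - x) \<bullet> b) ^ \<alpha> b)) has_sum g y) multi_indices"
  proof (intro exI[of _ "min r e"] conjI exI[of _ a] ballI)
    fix y assume y: "y \<in> ball x (min r e)"
    then have "g y = f y" using eq e by auto
    then show "((\<lambda>\<alpha>. a \<alpha> * (\<Prod>b\<in>Basis. ((y - x) \<bullet> b) ^ \<alpha> b)) has_sum g y) multi_indices"
      using H y by simp
  qed (use r e in auto)
qed

lemma analytic_restrict:
  fixes A :: "('m::topological_space, 'e::euclidean_space) chart set"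
  assumes A: "analytic_atlas A" and X: "analytic_vf_on A U X" and C: "open C" "C \<subseteq> U"
  shows "analytic_vf_on A C (restrict_vf C X)"
  unfolding analytic_vf_on_def vector_field_on_def
proof (intro conjI allI impI ballI)
  fix c p assume h: "c \<notin> A \<or> p \<notin> C \<or> p \<notin> fst c"
  show "restrict_vf C X c p = 0"
  proof (cases "p \<in> C")
    case True
    have X0: "\<forall>c p. (c \<notin> A \<or> p \<notin> U \<or> p \<notin> fst c) \<longrightarrow> X c p = 0"
      using X unfolding analytic_vf_on_def vector_field_on_def by blast
    have "c \<notin> A \<or> p \<notin> fst c" using h True by blast
    then have "X c p = 0" using X0 by blast
    then show ?thesis using True by (simp add: restrict_vf_def)
  qed (simp add: restrict_vf_def)
next
  fix c d p assume cd: "c \<in> A" "d \<in> A" "p \<in> C \<inter> fst c \<inter> fst d"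
  then obtain D where "(transition c d has_derivative D) (at (snd c p))" "X d p = D (X c p)"
    using X C unfolding analytic_vf_on_def vector_field_on_def by blast
  then show "\<exists>D. (transition c d has_derivative D) (at (snd c p)) \<and>
      restrict_vf C X d p = D (restrict_vf C X c p)"
    using cd by (auto simp: restrict_vf_def)
next
  fix c assume c: "c \<in> A"
  show "vanalytic_on (snd c ` (C \<inter> fst c)) (local_rep (restrict_vf C X) c)"
    unfolding vanalytic_on_def
  proof
    fix b :: 'e assume b: "b \<in> Basis"
    have "ranalytic_on (snd c ` (U \<inter> fst c)) (\<lambda>y. local_rep X c y \<bullet> b)"
      using X c b by (auto simp: analytic_vf_on_def vanalytic_on_def)
    then show "ranalytic_on (snd c ` (C \<inter> fst c)) (\<lambda>y. local_rep (restrict_vf C X) c y \<bullet> b)"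
    proof (rule ranalytic_mono)
      show "open (snd c ` (C \<inter> fst c))"
        by (rule chart_open_image[OF A c]) (use C chart_basic(1)[OF A c] in auto)
      show "snd c ` (C \<inter> fst c) \<subseteq> snd c ` (U \<inter> fst c)" using C by auto
      fix y assume "y \<in> snd c ` (C \<inter> fst c)"
      then obtain z where z: "z \<in> C" "z \<in> fst c" "y = snd c z" by auto
      then show "local_rep (restrict_vf C X) c y \<bullet> b = local_rep X c y \<bullet> b"
        using chart_inv[OF A c z(2)] by (simp add: local_rep_def restrict_vf_def)
    qed
  qed
qed

lemma germ_sub:
  assumes "Z \<in> germ_at q X" "open V" "q \<in> V" "\<And>c p. p \<in> V \<Longrightarrow> X c p = Y c p"
  shows "Z \<in> germ_at q Y"
proof -
  from assms(1) obtain V' where "open V'" "q \<in> V'" "\<forall>c. \<forall>p\<in>V'. Z c p = X c p"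
    by (auto simp: germ_at_def)
  then show ?thesis using assms(2-4)
    by (auto simp: germ_at_def intro!: exI[of _ "V \<inter> V'"])
qed

lemma germ_eqI:
  assumes "open V" "q \<in> V" "\<And>c p. p \<in> V \<Longrightarrow> X c p = Y c p"
  shows "germ_at q X = germ_at q Y"
  using germ_sub[of _ q X V Y] germ_sub[of _ q Y V X] assms by (metis subsetI subset_antisym)

lemma germ_eqD:
  assumes "germ_at q X = germ_at q Y"
  shows "\<exists>V. open V \<and> q \<in> V \<and> (\<forall>c. \<forall>p\<in>V. X c p = Y c p)"
proof -
  have "X \<in> germ_at q X" by (auto simp: germ_at_def intro!: exI[of _ UNIV])
  then show ?thesis using assms by (auto simp: germ_at_def)
qed

lemma restrict_restrict: "V \<subseteq> W \<Longrightarrow> restrict_vf V (restrict_vf W X) = restrict_vf V X"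
  by (auto simp: restrict_vf_def fun_eq_iff)





lemma key_extension:
  fixes A :: "('m::topological_space, 'e::euclidean_space) chart set"
    and F :: "'m set \<Rightarrow> ('m, 'e) vf set"
  assumes A: "analytic_atlas A" and adm: "admissible A F" and ad: "analytically_determined A F"
    and Vp: "open Vp" 
    and ext: "\<forall>q\<in>Vp. \<forall>g\<in>germs F q. \<exists>X. analytic_vf_on A Vp X \<and> germ_at q X = g"
    and q: "q \<in> connected_component_set Vp p" and g: "g \<in> germs F q"
  shows "\<exists>Y\<in>F (connected_component_set Vp p). germ_at q Y = g"
proof -
  define C where "C = connected_component_set Vp p"
  have Copen: "open C" unfolding C_def by (rule open_component_atlas[OF A Vp])
  have Ccon: "connected C" unfolding C_def by (rule connected_connected_component)
  have CV: "C \<subseteq> Vp" unfolding C_def by (rule connected_component_subset)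
  have qC: "q \<in> C" using q by (simp add: C_def)
  have restr: "\<And>U V X. connected U \<Longrightarrow> open U \<Longrightarrow> connected V \<Longrightarrow> open V \<Longrightarrow> V \<subseteq> U \<Longrightarrow> X \<in> F U
        \<Longrightarrow> restrict_vf V X \<in> F V"
  proof -
    have "sheaf_lvf A F" using adm by (simp add: admissible_def)
    then have "\<forall>U V X. connected U \<and> open U \<and> connected V \<and> open V \<and> V \<subseteq> U \<and> X \<in> F U
        \<longrightarrow> restrict_vf V X \<in> F V" unfolding sheaf_lvf_def by (rule conjunct1[OF conjunct2])
    then show "\<And>U V X. connected U \<Longrightarrow> open U \<Longrightarrow> connected V \<Longrightarrow> open V \<Longrightarrow> V \<subseteq> U \<Longrightarrow> X \<in> F U
        \<Longrightarrow> restrict_vf V X \<in> F V" by blast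
  qed
  from g obtain U0 X0 where U0: "connected U0" "open U0" "q \<in> U0" "X0 \<in> F U0" "g = germ_at q X0"
    by (auto simp: germs_def)
  have qV: "q \<in> Vp" using qC CV by blast
  obtain X where X: "analytic_vf_on A Vp X" "germ_at q X = g" using ext[rule_format, OF qV g] by blast
  obtain V where V: "open V" "q \<in> V" "\<forall>c. \<forall>p\<in>V. X c p = X0 c p"
    using germ_eqD[of q X X0] X(2) U0(5) by blast
  obtain W where W: "connected W" "open W" "q \<in> W" "W \<subseteq> V \<inter> U0 \<inter> C"
  proof -
    have o: "open (V \<inter> U0 \<inter> C)" using V(1) U0(2) Copen by (intro open_Int)
    have qi: "q \<in> V \<inter> U0 \<inter> C" using V(2) U0(3) qC by blast
    show ?thesis using that locally_connected_atlas[OF A o qi] by blast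
  qed
  define Y where "Y = restrict_vf C X"
  have YA: "analytic_vf_on A C Y" unfolding Y_def by (rule analytic_restrict[OF A X(1) Copen CV])
  have ad2: "\<exists>\<A> :: 'm set \<Rightarrow> (('m, 'e) vf \<Rightarrow> ('m \<Rightarrow> real)) set.
        (\<forall>U. open U \<longrightarrow> (\<forall>\<Phi>\<in>\<A> U. \<forall>X. analytic_vf_on A U X \<longrightarrow> analytic_fun_on A U (\<Phi> X))) \<and>
        (\<forall>U V \<Phi> X. open U \<and> open V \<and> V \<subseteq> U \<and> \<Phi> \<in> \<A> U \<and> analytic_vf_on A U X \<longrightarrow>
            (\<exists>G\<in>\<A> V. \<forall>p\<in>V. \<Phi> X p = G (restrict_vf V X) p)) \<and>
        (\<forall>U X. open U \<and> analytic_vf_on A U X \<longrightarrow>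
            (X \<in> sheaf_sections F U \<longleftrightarrow> (\<forall>\<Phi>\<in>\<A> U. \<forall>p\<in>U. \<Phi> X p = 0)))"
    using ad unfolding analytically_determined_def by (rule conjunct2)
  from ad2 obtain \<A> :: "'m set \<Rightarrow> (('m, 'e) vf \<Rightarrow> ('m \<Rightarrow> real)) set" where
    a1: "\<forall>U. open U \<longrightarrow> (\<forall>\<Phi>\<in>\<A> U. \<forall>X. analytic_vf_on A U X \<longrightarrow> analytic_fun_on A U (\<Phi> X))" and
    a2: "\<forall>U V \<Phi> X. open U \<and> open V \<and> V \<subseteq> U \<and> \<Phi> \<in> \<A> U \<and> analytic_vf_on A U X \<longrightarrow>
            (\<exists>G\<in>\<A> V. \<forall>p\<in>V. \<Phi> X p = G (restrict_vf V X) p)" and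
    a3: "\<forall>U X. open U \<and> analytic_vf_on A U X \<longrightarrow>
            (X \<in> sheaf_sections F U \<longleftrightarrow> (\<forall>\<Phi>\<in>\<A> U. \<forall>p\<in>U. \<Phi> X p = 0))"
    by (elim exE conjE)
  have WC: "W \<subseteq> C" using W by blast
  have YW: "restrict_vf W Y = restrict_vf W X0"
    using W V by (auto simp: Y_def restrict_vf_def fun_eq_iff)
  have YWA: "analytic_vf_on A W (restrict_vf W Y)" by (rule analytic_restrict[OF A YA W(2) WC])
  have sec: "restrict_vf W Y \<in> sheaf_sections F W"
    unfolding sheaf_sections_def
  proof (intro CollectI allI impI)
    fix V' assume V': "connected V' \<and> open V' \<and> V' \<subseteq> W"
    then have "restrict_vf V' (restrict_vf W Y) = restrict_vf V' X0" by (simp add: YW restrict_restrict)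
    moreover have "restrict_vf V' X0 \<in> F V'"
      by (rule restr[OF U0(1,2) _ _ _ U0(4)]) (use V' W in auto)
    ultimately show "restrict_vf V' (restrict_vf W Y) \<in> F V'" by simp
  qed
  have allz: "\<forall>\<Phi>\<in>\<A> C. \<forall>p\<in>C. \<Phi> Y p = 0"
  proof (intro ballI)
    fix \<Phi> assume \<Phi>: "\<Phi> \<in> \<A> C"
    have fa: "analytic_fun_on A C (\<Phi> Y)" using a1[rule_format, OF Copen \<Phi> YA] .
    obtain G where G: "G \<in> \<A> W" "\<forall>p\<in>W. \<Phi> Y p = G (restrict_vf W Y) p"
      using a2[rule_format, of C W \<Phi> Y] Copen W(2) WC \<Phi> YA by auto
    have "\<forall>\<Psi>\<in>\<A> W. \<forall>p\<in>W. \<Psi> (restrict_vf W Y) p = 0"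
      using a3[rule_format, of W "restrict_vf W Y"] W(2) YWA sec by simp
    then have z: "\<And>z. z \<in> W \<Longrightarrow> \<Phi> Y z = 0" using G by auto
    have "\<forall>z\<in>C. \<Phi> Y z = 0"
      by (rule identity_manifold[OF A Ccon Copen fa W(2) _ WC z]) (use W in auto)
    then show "\<And>p. p \<in> C \<Longrightarrow> \<Phi> Y p = 0" by blast
  qed
  have "Y \<in> sheaf_sections F C" using a3[rule_format, OF conjI[OF Copen YA]] allz by blast
  then have "\<forall>V. connected V \<and> open V \<and> V \<subseteq> C \<longrightarrow> restrict_vf V Y \<in> F V"
    unfolding sheaf_sections_def by (rule CollectD)
  then have "restrict_vf C Y \<in> F C" using Ccon Copen by blast
  moreover have "restrict_vf C Y = Y" unfolding Y_def by (rule restrict_restrict) (rule order_refl)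
  ultimately have YF: "Y \<in> F C" by simp
  have "germ_at q Y = germ_at q X"
    by (rule germ_eqI[OF Copen qC]) (simp add: Y_def restrict_vf_def)
  then have "germ_at q Y = g" using X(2) by simp
  then show ?thesis unfolding C_def[symmetric] using YF by blast
qed



lemma sheaf_lin_closed:
  fixes k :: nat and a :: "nat \<Rightarrow> real"
  assumes shf: "sheaf_lvf A F" and C: "connected C" "open C" and Ys: "\<forall>i<k. Ys i \<in> F C"
  shows "(\<lambda>c p. \<Sum>i<k. a i *\<^sub>R Ys i c p) \<in> F C"
  using Ys
proof (induction k)
  case 0
  have "zero_vf \<in> F C" using conjunct1[OF shf[unfolded sheaf_lvf_def], rule_format, OF conjI[OF C]] by (elim conjE)
  then show ?case by (simp add: zero_vf_def)
next
  case (Suc k)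
  have cl0: "F C \<subseteq> Collect (smooth_vf_on A C) \<and> zero_vf \<in> F C \<and>
     (\<forall>X\<in>F C. \<forall>Y\<in>F C. (\<lambda>c p. X c p + Y c p) \<in> F C) \<and>
     (\<forall>X\<in>F C. \<forall>r::real. (\<lambda>c p. r *\<^sub>R X c p) \<in> F C)"
    using conjunct1[OF shf[unfolded sheaf_lvf_def], rule_format, OF conjI[OF C]] .
  have cl1: "\<forall>X\<in>F C. \<forall>Y\<in>F C. (\<lambda>c p. X c p + Y c p) \<in> F C"
    using cl0 by (elim conjE)
  have cl2: "\<forall>X\<in>F C. \<forall>r::real. (\<lambda>c p. r *\<^sub>R X c p) \<in> F C"
    using cl0 by (elim conjE)
  note cl = cl1 cl2
  have h1: "(\<lambda>c p. \<Sum>i<k. a i *\<^sub>R Ys i c p) \<in> F C" using Suc by simp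
  have h2: "(\<lambda>c p. a k *\<^sub>R Ys k c p) \<in> F C" using Suc.prems cl(2) by simp
  have "(\<lambda>c p. (\<Sum>i<k. a i *\<^sub>R Ys i c p) + a k *\<^sub>R Ys k c p) \<in> F C"
    using cl1[rule_format, OF h1 h2] by simp
  then show ?case by simp
qed

lemma kappa_eq:
  fixes F :: "'m::topological_space set \<Rightarrow> ('m, 'e::euclidean_space) vf set"
  assumes shf: "sheaf_lvf A F" and uc: "unique_continuation F"
    and C: "connected C" "open C" "q \<in> C"
    and ext: "\<forall>g\<in>germs F q. \<exists>Y\<in>F C. germ_at q Y = g"
  shows "kappa F q = Sup {enat k | k. \<exists>Xs. (\<forall>i<k. Xs i \<in> F C) \<and> vf_lin_indep k Xs}"
proof -
  have eq: "(\<exists>Us Xs. (\<forall>i<k. connected (Us i) \<and> open (Us i) \<and> q \<in> Us i \<and> Xs i \<in> F (Us i))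
              \<and> germ_lin_indep q k Xs) \<longleftrightarrow> (\<exists>Xs. (\<forall>i<k. Xs i \<in> F C) \<and> vf_lin_indep k Xs)" for k :: nat
  proof
    assume "\<exists>Us Xs. (\<forall>i<k. connected (Us i) \<and> open (Us i) \<and> q \<in> Us i \<and> Xs i \<in> F (Us i))
              \<and> germ_lin_indep q k Xs"
    then obtain Us Xs where UX: "\<forall>i<k. connected (Us i) \<and> open (Us i) \<and> q \<in> Us i \<and> Xs i \<in> F (Us i)"
      and gl: "germ_lin_indep q k Xs" by blast
    have "\<forall>i. \<exists>Y. i < k \<longrightarrow> Y \<in> F C \<and> germ_at q Y = germ_at q (Xs i)"
    proof (intro allI)
      fix i show "\<exists>Y. i < k \<longrightarrow> Y \<in> F C \<and> germ_at q Y = germ_at q (Xs i)"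
      proof (cases "i < k")
        case True
        then have "germ_at q (Xs i) \<in> germs F q" using UX by (auto simp: germs_def)
        then show ?thesis using ext by blast
      qed simp
    qed
    from choice[OF this] obtain Ys where Ys0: "\<forall>i. i < k \<longrightarrow> Ys i \<in> F C \<and> germ_at q (Ys i) = germ_at q (Xs i)"
      by blast
    have Ys: "\<And>i. i < k \<Longrightarrow> Ys i \<in> F C \<and> germ_at q (Ys i) = germ_at q (Xs i)" using Ys0 by blast
    have "\<forall>i. \<exists>V. i < k \<longrightarrow> open V \<and> q \<in> V \<and> (\<forall>c. \<forall>p\<in>V. Ys i c p = Xs i c p)"
    proof
      fix i show "\<exists>V. i < k \<longrightarrow> open V \<and> q \<in> V \<and> (\<forall>c. \<forall>p\<in>V. Ys i c p = Xs i c p)"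
      proof (cases "i < k")
        case True
        from germ_eqD[OF conjunct2[OF Ys[OF True]]] show ?thesis by blast
      qed simp
    qed
    from choice[OF this] obtain Vs where Vs0: "\<forall>i. i < k \<longrightarrow> open (Vs i) \<and> q \<in> Vs i \<and> (\<forall>c. \<forall>p\<in>Vs i. Ys i c p = Xs i c p)"
      by blast
    have Vs: "\<And>i. i < k \<Longrightarrow> open (Vs i) \<and> q \<in> Vs i \<and> (\<forall>c. \<forall>p\<in>Vs i. Ys i c p = Xs i c p)"
      using Vs0 by blast
    define V where "V = (\<Inter>i\<in>{..<k}. Vs i)"
    have Vo: "open V" unfolding V_def using Vs by (intro open_INT) auto
    have qV: "q \<in> V" unfolding V_def using Vs by auto
    have "vf_lin_indep k Ys"
      unfolding vf_lin_indep_def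
    proof (rule allI, rule impI)
      fix a :: "nat \<Rightarrow> real" assume z: "(\<lambda>c p. \<Sum>i<k. a i *\<^sub>R Ys i c p) = zero_vf"
      have "germ_at q (\<lambda>c p. \<Sum>i<k. a i *\<^sub>R Xs i c p) = germ_at q zero_vf"
      proof (rule germ_eqI[OF Vo qV])
        fix c p assume p: "p \<in> V"
        have "(\<Sum>i<k. a i *\<^sub>R Xs i c p) = (\<Sum>i<k. a i *\<^sub>R Ys i c p)"
        proof (rule sum.cong[OF refl])
          fix i assume i: "i \<in> {..<k}"
          then have "p \<in> Vs i" using p by (auto simp: V_def)
          moreover have "\<forall>c. \<forall>p\<in>Vs i. Ys i c p = Xs i c p" using Vs[of i] i by blast
          ultimately have "Ys i c p = Xs i c p" by blast
          then show "a i *\<^sub>R Xs i c p = a i *\<^sub>R Ys i c p" by simp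
        qed
        also have "\<dots> = zero_vf c p" using fun_cong[OF fun_cong[OF z, of c], of p] by simp
        finally show "(\<Sum>i<k. a i *\<^sub>R Xs i c p) = zero_vf c p" .
      qed
      then show "\<forall>i<k. a i = 0" using gl[unfolded germ_lin_indep_def, THEN spec[of _ a]] by (rule mp[rotated])
    qed
    then show "\<exists>Xs. (\<forall>i<k. Xs i \<in> F C) \<and> vf_lin_indep k Xs" using Ys by blast
  next
    assume "\<exists>Xs. (\<forall>i<k. Xs i \<in> F C) \<and> vf_lin_indep k Xs"
    then obtain Ys where Ys: "\<forall>i<k. Ys i \<in> F C" and li: "vf_lin_indep k Ys" by blast
    have "germ_lin_indep q k Ys"
      unfolding germ_lin_indep_def
    proof (rule allI, rule impI)
      fix a :: "nat \<Rightarrow> real"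
      assume g: "germ_at q (\<lambda>c p. \<Sum>i<k. a i *\<^sub>R Ys i c p) = germ_at q zero_vf"
      obtain V where V: "open V" "q \<in> V" "\<forall>c. \<forall>p\<in>V. (\<Sum>i<k. a i *\<^sub>R Ys i c p) = zero_vf c p"
        using germ_eqD[OF g] by blast
      have S: "(\<lambda>c p. \<Sum>i<k. a i *\<^sub>R Ys i c p) \<in> F C" by (rule sheaf_lin_closed[OF shf C(1,2) Ys])
      have "(\<lambda>c p. \<Sum>i<k. a i *\<^sub>R Ys i c p) = zero_vf"
      proof -
        have uc': "\<forall>U X W. connected U \<and> open U \<and> X \<in> F U \<and> open W \<and> W \<noteq> {} \<and> W \<subseteq> U \<and>
          (\<forall>c. \<forall>p\<in>W. X c p = 0) \<longrightarrow> X = zero_vf" using uc unfolding unique_continuation_def .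
        have h: "open (V \<inter> C)" "V \<inter> C \<noteq> {}" "V \<inter> C \<subseteq> C"
          "\<forall>c. \<forall>p\<in>V \<inter> C. (\<lambda>c p. \<Sum>i<k. a i *\<^sub>R Ys i c p) c p = 0"
          using C V by (auto simp: zero_vf_def)
        have conj: "connected C \<and> open C \<and> (\<lambda>c p. \<Sum>i<k. a i *\<^sub>R Ys i c p) \<in> F C \<and> open (V \<inter> C) \<and>
          V \<inter> C \<noteq> {} \<and> V \<inter> C \<subseteq> C \<and> (\<forall>c. \<forall>p\<in>V \<inter> C. (\<lambda>c p. \<Sum>i<k. a i *\<^sub>R Ys i c p) c p = 0)"
          by (intro conjI C(1) C(2) S h(1) h(2) h(3) h(4))
        show ?thesis by (rule uc'[rule_format, OF conj])
      qed
      then show "\<forall>i<k. a i = 0" using li[unfolded vf_lin_indep_def, THEN spec[of _ a]] by (rule mp[rotated])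
    qed
    then show "\<exists>Us Xs. (\<forall>i<k. connected (Us i) \<and> open (Us i) \<and> q \<in> Us i \<and> Xs i \<in> F (Us i))
              \<and> germ_lin_indep q k Xs"
      using Ys C by (intro exI[of _ "\<lambda>_. C"] exI[of _ Ys]) auto
  qed
  show ?thesis unfolding kappa_def using eq by simp
qed



theorem proposition5p9:
  fixes A :: "('m::{t2_space, second_countable_topology}, 'e::euclidean_space) chart set"
    and F :: "'m set \<Rightarrow> ('m, 'e) vf set"
  assumes "analytic_atlas A"
    and "connected (UNIV :: 'm set)"
    and "admissible A F"
    and "analytically_determined A F"
    and "\<forall>p. \<exists>Vp. open Vp \<and> p \<in> Vp \<and>
           (\<forall>q\<in>Vp. \<forall>g\<in>germs F q. \<exists>X. analytic_vf_on A Vp X \<and> germ_at q X = g)"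
  shows "regular A F"
proof -
  have shf: "sheaf_lvf A F" using assms(3) unfolding admissible_def by (elim conjE)
  have uc: "unique_continuation F" using assms(3) unfolding admissible_def by (elim conjE)
  have loc: "\<exists>N. open N \<and> p \<in> N \<and> (\<forall>q\<in>N. kappa F q = kappa F p)" for p
  proof -
    obtain Vp where Vp: "open Vp" "p \<in> Vp"
      "\<forall>q\<in>Vp. \<forall>g\<in>germs F q. \<exists>X. analytic_vf_on A Vp X \<and> germ_at q X = g"
      using assms(5) by blast
    define C where "C = connected_component_set Vp p"
    have Co: "open C" unfolding C_def by (rule open_component_atlas[OF assms(1) Vp(1)])
    have Cc: "connected C" unfolding C_def by (rule connected_connected_component)
    have pC: "p \<in> C" unfolding C_def using Vp(2) by (simp add: connected_component_refl)
    have T: "kappa F q = Sup {enat k | k. \<exists>Xs. (\<forall>i<k. Xs i \<in> F C) \<and> vf_lin_indep k Xs}"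
      if q: "q \<in> C" for q
    proof (rule kappa_eq[OF shf uc Cc Co q])
      have q': "q \<in> connected_component_set Vp p" using q by (simp add: C_def)
      show "\<forall>g\<in>germs F q. \<exists>Y\<in>F C. germ_at q Y = g"
      proof
        fix g assume g: "g \<in> germs F q"
        show "\<exists>Y\<in>F C. germ_at q Y = g"
          using key_extension[OF assms(1,3,4) Vp(1) Vp(3) q' g] by (simp add: C_def)
      qed
    qed
    have "\<forall>q\<in>C. kappa F q = kappa F p"
    proof
      fix q assume "q \<in> C"
      then show "kappa F q = kappa F p" using T[of q] T[OF pC] by simp
    qed
    then show ?thesis using Co pC by blast
  qed
  obtain p0 :: 'm where True by blast
  define P where "P = {q. kappa F q = kappa F p0}"
  have oP: "open P"
  proof (subst open_subopen, intro ballI)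
    fix q assume qP: "q \<in> P"
    obtain N where N: "open N" "q \<in> N" "\<forall>z\<in>N. kappa F z = kappa F q" using loc by blast
    have "N \<subseteq> P" using N(3) qP by (simp add: P_def subset_iff)
    then show "\<exists>T. open T \<and> q \<in> T \<and> T \<subseteq> P" using N by blast
  qed
  have onP: "open (- P)"
  proof (subst open_subopen, intro ballI)
    fix q assume qP: "q \<in> - P"
    obtain N where N: "open N" "q \<in> N" "\<forall>z\<in>N. kappa F z = kappa F q" using loc by blast
    have "N \<subseteq> - P" using N(3) qP by (simp add: P_def subset_iff)
    then show "\<exists>T. open T \<and> q \<in> T \<and> T \<subseteq> - P" using N by blast
  qed
  have "P \<inter> UNIV = {} \<or> - P \<inter> UNIV = {}"
    by (rule connectedD[OF assms(2) oP onP]) simp_all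
  moreover have "p0 \<in> P" by (simp add: P_def)
  ultimately have "- P = {}" by blast
  then have "\<forall>q. kappa F q = kappa F p0" unfolding P_def by blast
  then have "\<exists>k0. \<forall>q. kappa F q = k0" by blast
  then show ?thesis unfolding regular_def using assms(3) by simp
qed

end
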